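(* Let $n\in\mathbb{N}$, let $c=(c_{i,j})$ be an $n\times(n+1)$ matrix with entries in $\{0,1\}$, $\sigma_1,\ldots,\sigma_n>0$, $\gamma_1,\ldots,\gamma_{n+1}>0$, and $\gamma^\ast_{c,i}=\sum_jc_{i,j}\gamma_j$. Let $\mathbf{X}=(X_1,\ldots,X_n)'$ have decumulative distribution function $\mathbf{P}[X_1>x_1,\ldots,X_n>x_n]=\prod_{j=1}^{n+1}(1+\sum_{i=1}^nc_{i,j}x_i/\sigma_i)^{-\gamma_j}$ for $(x_1,\ldots,x_n)'\in(0,\infty)^n$. Then, for $i=1,\ldots,n$ and $q\in[0,1)$, whenever $CTE_q[X_i]$ exists, \[ CTE_q[X_i]=\mathbf{E}[X_i]\frac{\overline{F}_{X_i^\ast}(VaR_q[X_i])}{1-q}+VaR_q[X_i]=\mathbf{E}[X_i]+VaR_q[X_i]\frac{\gamma^\ast_{c,i}}{\gamma^\ast_{c,i}-1}, \] where $X_i^\ast\sim Pa(II)(\sigma_i,\gamma^\ast_{c,i}-1)$ with decumulative distribution function $\overline{F}_{X_i^\ast}$.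
   Context: $Pa(II)(\sigma,\alpha)$ has decumulative distribution function $(1+x/\sigma)^{-\alpha}$, $x>0$. $VaR_q[Y]=\inf\{x:\mathbf{P}[Y\le x]\ge q\}$ and $CTE_q[Y]=\mathbf{E}[Y\mid Y>VaR_q[Y]]$. *)

theory Defs
  imports "HOL-Probability.Probability"
begin

text \<open>Value-at-Risk of a (nonnegative) loss X at level q:
  VaR_q[X] = inf {x : P[X <= x] >= q}, the infimum taken over losses x >= 0
  (for q > 0 and X > 0 a.s. this is the usual quantile; for q = 0 it gives
  the left endpoint 0 of the support).\<close>
definition VaR :: "'a measure \<Rightarrow> ('a \<Rightarrow> real) \<Rightarrow> real \<Rightarrow> real" where
  "VaR M X q = Inf {x::real. 0 \<le> x \<and> q \<le> measure M {\<omega> \<in> space M. X \<omega> \<le> x}}"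

definition CTE :: "'a measure \<Rightarrow> ('a \<Rightarrow> real) \<Rightarrow> real \<Rightarrow> real" where
  "CTE M X q =
     (\<integral>\<omega>. X \<omega> * indicator {\<omega> \<in> space M. X \<omega> > VaR M X q} \<omega> \<partial>M)
     / measure M {\<omega> \<in> space M. X \<omega> > VaR M X q}"

definition pareto2_sf :: "real \<Rightarrow> real \<Rightarrow> real \<Rightarrow> real" where
  "pareto2_sf \<sigma> \<alpha> x = (if x > 0 then (1 + x / \<sigma>) powr (- \<alpha>) else 1)"

end

theory Submission
  imports Defs
begin



lemma alpha_gt1:
  fixes M :: "'a measure" and Y :: "'a \<Rightarrow> real"
  assumes P: "prob_space M" and Ym[measurable]: "Y \<in> borel_measurable M" and sp: "\<sigma> > 0"
    and surv: "\<And>x. x > 0 \<Longrightarrow> measure M {\<omega> \<in> space M. Y \<omega> > x} = (1 + x/\<sigma>) powr (-\<alpha>)"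
    and int: "integrable M (\<lambda>\<omega>. Y \<omega> * indicator {\<omega> \<in> space M. Y \<omega> > a} \<omega>)"
  shows "\<alpha> > 1"
proof (rule ccontr)
  interpret prob_space M by fact
  assume "\<not> \<alpha> > 1" hence al: "\<alpha> \<le> 1" by simp
  define s where "s t \<omega> = Y \<omega> * indicator {\<omega> \<in> space M. Y \<omega> > t} \<omega>" for t \<omega>
  define w where "w \<omega> = \<bar>Y \<omega> * indicator {\<omega> \<in> space M. Y \<omega> > a} \<omega>\<bar>" for \<omega>
  have lim: "((\<lambda>t. integral\<^sup>L M (s t)) \<longlongrightarrow> integral\<^sup>L M (\<lambda>_. 0::real)) at_top"
  proof (rule integral_dominated_convergence_at_top[where w=w])
    show "integrable M w" unfolding w_def using int by auto
    show "\<And>t. s t \<in> borel_measurable M" unfolding s_def by measurable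
    show "AE x in M. ((\<lambda>i. s i x) \<longlongrightarrow> 0) at_top"
    proof (rule AE_I2)
      fix x assume "x \<in> space M"
      have "eventually (\<lambda>i. s i x = 0) at_top"
        using eventually_ge_at_top[of "Y x"] by eventually_elim (auto simp: s_def)
      thus "((\<lambda>i. s i x) \<longlongrightarrow> 0) at_top" by (rule tendsto_eventually)
    qed
    show "\<forall>\<^sub>F i in at_top. AE x in M. norm (s i x) \<le> w x"
      using eventually_ge_at_top[of "a"]
      by eventually_elim (auto simp: s_def w_def split: split_indicator)
  qed simp
  have "eventually (\<lambda>t. \<sigma>/2 \<le> integral\<^sup>L M (s t)) at_top"
    using eventually_ge_at_top[of "max a \<sigma>"]
  proof eventually_elim
    case (elim t)
    hence t: "t \<ge> a" "t \<ge> \<sigma>" "t > 0" using sp by auto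
    have [measurable]: "s t \<in> borel_measurable M" unfolding s_def by measurable
    have ist: "integrable M (s t)"
      by (rule Bochner_Integration.integrable_bound[OF int]) (use t in \<open>auto simp: s_def split: split_indicator intro!: AE_I2\<close>)
    have "integral\<^sup>L M (\<lambda>\<omega>. t * indicator {\<omega> \<in> space M. Y \<omega> > t} \<omega>) \<le> integral\<^sup>L M (s t)"
      by (rule integral_mono[OF _ ist]) (auto simp: less_top[symmetric] intro!: integrable_real_indicator simp: s_def split: split_indicator)
    moreover have "integral\<^sup>L M (\<lambda>\<omega>. t * indicator {\<omega> \<in> space M. Y \<omega> > t} \<omega>) = t * (1 + t/\<sigma>) powr (-\<alpha>)"
      using surv[OF t(3)] by simp
    moreover have "(1 + t/\<sigma>) powr (-1) \<le> (1 + t/\<sigma>) powr (-\<alpha>)"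
      by (rule powr_mono) (use al sp t in auto)
    moreover have "(1 + t/\<sigma>) powr (-1) = \<sigma> / (\<sigma> + t)"
      using sp t by (simp add: powr_minus field_simps)
    moreover have "\<sigma>/2 \<le> t * (\<sigma> / (\<sigma> + t))"
      using sp t by (simp add: field_simps)
    ultimately show ?case
      by (smt (verit, best) mult_left_mono t(3))
  qed
  hence "\<sigma>/2 \<le> integral\<^sup>L M (\<lambda>_. 0::real)"
    by (intro tendsto_lowerbound[OF lim]) auto
  thus False using sp by simp
qed



lemma cdf_pos:
  fixes M :: "'a measure" and Y :: "'a \<Rightarrow> real"
  assumes P: "prob_space M" and Ym[measurable]: "Y \<in> borel_measurable M" and sp: "\<sigma> > 0"
    and surv: "\<And>x. x > 0 \<Longrightarrow> measure M {\<omega> \<in> space M. Y \<omega> > x} = (1 + x/\<sigma>) powr (-\<alpha>)"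
    and x: "x > 0"
  shows "measure M {\<omega> \<in> space M. Y \<omega> \<le> x} = 1 - (1 + x/\<sigma>) powr (-\<alpha>)"
proof -
  interpret prob_space M by fact
  have "{\<omega> \<in> space M. Y \<omega> \<le> x} = space M - {\<omega> \<in> space M. Y \<omega> > x}" by auto
  hence "measure M {\<omega> \<in> space M. Y \<omega> \<le> x} = 1 - measure M {\<omega> \<in> space M. Y \<omega> > x}"
    by (simp add: prob_compl)
  thus ?thesis using surv[OF x] by simp
qed

lemma cdf_zero:
  fixes M :: "'a measure" and Y :: "'a \<Rightarrow> real"
  assumes P: "prob_space M" and Ym[measurable]: "Y \<in> borel_measurable M" and sp: "\<sigma> > 0"
    and surv: "\<And>x. x > 0 \<Longrightarrow> measure M {\<omega> \<in> space M. Y \<omega> > x} = (1 + x/\<sigma>) powr (-\<alpha>)"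
  shows "measure M {\<omega> \<in> space M. Y \<omega> \<le> 0} = 0"
proof -
  interpret prob_space M by fact
  have lim: "((\<lambda>e. 1 - (1 + e/\<sigma>) powr (-\<alpha>)) \<longlongrightarrow> 1 - (1 + 0/\<sigma>) powr (-\<alpha>)) (at_right 0)"
    using sp by (intro tendsto_intros) auto
  have "eventually (\<lambda>e. measure M {\<omega> \<in> space M. Y \<omega> \<le> 0} \<le> 1 - (1 + e/\<sigma>) powr (-\<alpha>)) (at_right 0)"
    using eventually_at_right_less[of "0::real"]
  proof eventually_elim
    case (elim e)
    hence e: "e > 0" by simp
    have "measure M {\<omega> \<in> space M. Y \<omega> \<le> 0} \<le> measure M {\<omega> \<in> space M. Y \<omega> \<le> e}"
      by (rule finite_measure_mono) (use e in auto)
    thus ?case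
      using cdf_pos[OF P Ym sp surv e] by simp
  qed
  hence "measure M {\<omega> \<in> space M. Y \<omega> \<le> 0} \<le> 0"
    using tendsto_lowerbound[OF lim] by simp
  thus ?thesis using measure_nonneg[of M] by (meson order_antisym)
qed

lemma powr_le_iff_aux:
  fixes u r \<alpha> :: real
  assumes "u > 0" "r > 0" "\<alpha> > 0"
  shows "u powr (-\<alpha>) \<le> r \<longleftrightarrow> r powr (-1/\<alpha>) \<le> u"
proof -
  have e1: "ln (u powr (-\<alpha>)) = -\<alpha> * ln u" using assms by (simp add: ln_powr)
  have e2: "ln (r powr (-1/\<alpha>)) = -1/\<alpha> * ln r" using assms by (simp add: ln_powr)
  have "u powr (-\<alpha>) \<le> r \<longleftrightarrow> ln (u powr (-\<alpha>)) \<le> ln r" using assms by (intro ln_le_cancel_iff[symmetric]) auto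
  also have "\<dots> \<longleftrightarrow> -\<alpha> * ln u \<le> ln r" using e1 by simp
  also have "\<dots> \<longleftrightarrow> -1/\<alpha> * ln r \<le> ln u" using assms by (simp add: field_simps, linarith)
  also have "\<dots> \<longleftrightarrow> ln (r powr (-1/\<alpha>)) \<le> ln u" using e2 by simp
  also have "\<dots> \<longleftrightarrow> r powr (-1/\<alpha>) \<le> u" using assms by (intro ln_le_cancel_iff) auto
  finally show ?thesis .
qed

lemma var_lemma:
  fixes M :: "'a measure" and Y :: "'a \<Rightarrow> real"
  assumes P: "prob_space M" and Ym[measurable]: "Y \<in> borel_measurable M" and sp: "\<sigma> > 0"
    and ap: "\<alpha> > 0"
    and surv: "\<And>x. x > 0 \<Longrightarrow> measure M {\<omega> \<in> space M. Y \<omega> > x} = (1 + x/\<sigma>) powr (-\<alpha>)"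
    and q: "0 \<le> q" "q < 1"
  shows "VaR M Y q \<ge> 0 \<and> measure M {\<omega> \<in> space M. Y \<omega> > VaR M Y q} = 1 - q
     \<and> (1 + VaR M Y q/\<sigma>) powr (-\<alpha>) = 1 - q"
proof (cases "q = 0")
  case True
  interpret prob_space M by fact
  have "{x::real. 0 \<le> x \<and> q \<le> measure M {\<omega> \<in> space M. Y \<omega> \<le> x}} = {0..}"
    using True by auto
  hence v: "VaR M Y q = 0" unfolding VaR_def by simp
  have "{\<omega> \<in> space M. Y \<omega> > 0} = space M - {\<omega> \<in> space M. Y \<omega> \<le> 0}" by auto
  hence "measure M {\<omega> \<in> space M. Y \<omega> > 0} = 1 - measure M {\<omega> \<in> space M. Y \<omega> \<le> 0}"
    by (simp add: prob_compl)
  thus ?thesis using v True cdf_zero[OF P Ym sp surv] by simp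
next
  case False
  interpret prob_space M by fact
  have qp: "q > 0" using False q by simp
  define x0 where "x0 = \<sigma> * ((1-q) powr (-1/\<alpha>) - 1)"
  have "ln ((1-q) powr (-1/\<alpha>)) > 0"
    using q qp ap by (simp add: ln_powr divide_neg_pos)
  moreover have "(1-q) powr (-1/\<alpha>) > 0" using q by simp
  ultimately have g1: "(1-q) powr (-1/\<alpha>) > 1"
    using ln_gt_zero_iff by blast
  hence x0p: "x0 > 0" unfolding x0_def using sp by simp
  have iff: "q \<le> measure M {\<omega> \<in> space M. Y \<omega> \<le> x} \<longleftrightarrow> x0 \<le> x" if "0 \<le> x" for x
  proof (cases "x = 0")
    case True thus ?thesis using cdf_zero[OF P Ym sp surv] qp x0p by simp
  next
    case False
    hence xp: "x > 0" using that by simp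
    have "q \<le> measure M {\<omega> \<in> space M. Y \<omega> \<le> x} \<longleftrightarrow> (1 + x/\<sigma>) powr (-\<alpha>) \<le> 1 - q"
      using cdf_pos[OF P Ym sp surv xp] by auto
    also have "\<dots> \<longleftrightarrow> (1-q) powr (-1/\<alpha>) \<le> 1 + x/\<sigma>"
      by (rule powr_le_iff_aux) (use xp sp q ap in \<open>auto intro: add_pos_pos\<close>)
    also have "\<dots> \<longleftrightarrow> x0 \<le> x" unfolding x0_def using sp by (simp add: field_simps)
    finally show ?thesis .
  qed
  have "{x::real. 0 \<le> x \<and> q \<le> measure M {\<omega> \<in> space M. Y \<omega> \<le> x}} = {x0..}"
    using iff x0p by auto
  hence v: "VaR M Y q = x0" unfolding VaR_def by simp
  have "(1 + x0/\<sigma>) powr (-\<alpha>) = ((1-q) powr (-1/\<alpha>)) powr (-\<alpha>)"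
    unfolding x0_def using sp by simp
  also have "\<dots> = 1 - q" using ap q by (simp add: powr_powr)
  finally have e: "(1 + x0/\<sigma>) powr (-\<alpha>) = 1 - q" .
  show ?thesis using v e surv[OF x0p] x0p by simp
qed



definition pd :: "real \<Rightarrow> real \<Rightarrow> real \<Rightarrow> real" where
  "pd \<sigma> \<alpha> x = (if 0 \<le> x then \<alpha>/\<sigma> * (1 + x/\<sigma>) powr (-\<alpha>-1) else 0)"

lemma pd_meas[measurable]: "pd \<sigma> \<alpha> \<in> borel_measurable borel"
  unfolding pd_def by measurable

lemma pd_nonneg: "\<sigma> > 0 \<Longrightarrow> \<alpha> > 0 \<Longrightarrow> pd \<sigma> \<alpha> x \<ge> 0"
  unfolding pd_def by auto

lemma deriv_F0:
  assumes "\<sigma> > 0" "y \<ge> 0"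
  shows "((\<lambda>y. - ((1 + y/\<sigma>) powr (-\<alpha>))) has_real_derivative (\<alpha>/\<sigma> * (1 + y/\<sigma>) powr (-\<alpha>-1))) (at y)"
proof -
  have p: "1 + y/\<sigma> > 0" using assms by (simp add: add_pos_nonneg)
  show ?thesis
    by (rule derivative_eq_intros refl | use p assms in simp)+
qed

lemma deriv_F0':
  assumes "\<sigma> > 0" "y \<ge> 0"
  shows "((\<lambda>y. - ((1 + y/\<sigma>) powr (-\<alpha>))) has_real_derivative (\<alpha> * (1 + y/\<sigma>) powr (-\<alpha>-1) / \<sigma>)) (at y)"
  using deriv_F0[OF assms, of \<alpha>] by simp

lemma pd_ind_eq:
  "ennreal (pd \<sigma> \<alpha> y) * indicator {..x} y
   = ennreal (\<alpha>/\<sigma> * (1 + y/\<sigma>) powr (-\<alpha>-1)) * indicator {0..x} y"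
  unfolding pd_def by (auto split: split_indicator)

lemma pd_cdf:
  assumes s: "\<sigma> > 0" and a: "\<alpha> > 0" and x: "x \<ge> 0"
  shows "(\<integral>\<^sup>+y. ennreal (pd \<sigma> \<alpha> y) * indicator {..x} y \<partial>lborel) = ennreal (1 - (1 + x/\<sigma>) powr (-\<alpha>))"
proof -
  have "(\<integral>\<^sup>+y. ennreal (pd \<sigma> \<alpha> y) * indicator {..x} y \<partial>lborel)
     = (\<integral>\<^sup>+y. ennreal (\<alpha>/\<sigma> * (1 + y/\<sigma>) powr (-\<alpha>-1)) * indicator {0..x} y \<partial>lborel)"
    by (simp add: pd_ind_eq)
  also have "\<dots> = ennreal (- ((1 + x/\<sigma>) powr (-\<alpha>)) - - ((1 + 0/\<sigma>) powr (-\<alpha>)))"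
    by (rule nn_integral_FTC_Icc[where F="\<lambda>y. - ((1 + y/\<sigma>) powr (-\<alpha>))"])
       (use s a x in \<open>auto intro!: deriv_F0 deriv_F0'\<close>)
  finally show ?thesis by simp
qed

lemma pd_cdf_neg:
  assumes x: "x < 0"
  shows "(\<integral>\<^sup>+y. ennreal (pd \<sigma> \<alpha> y) * indicator {..x} y \<partial>lborel) = 0"
  using x by (simp add: pd_ind_eq)

lemma pd_total:
  assumes s: "\<sigma> > 0" and a: "\<alpha> > 0"
  shows "(\<integral>\<^sup>+y. ennreal (pd \<sigma> \<alpha> y) \<partial>lborel) = 1"
proof -
  have "(\<integral>\<^sup>+y. ennreal (pd \<sigma> \<alpha> y) \<partial>lborel)
     = (\<integral>\<^sup>+y. ennreal (\<alpha>/\<sigma> * (1 + y/\<sigma>) powr (-\<alpha>-1)) * indicator {0..} y \<partial>lborel)"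
    by (intro nn_integral_cong) (auto simp: pd_def split: split_indicator)
  also have "\<dots> = ennreal (0 - - ((1 + 0/\<sigma>) powr (-\<alpha>)))"
  proof (rule nn_integral_FTC_atLeast[where F="\<lambda>y. - ((1 + y/\<sigma>) powr (-\<alpha>))"])
    show "((\<lambda>y. - ((1 + y/\<sigma>) powr (-\<alpha>))) \<longlongrightarrow> 0) at_top"
    proof -
      have "filterlim (\<lambda>y. 1 + y/\<sigma>) at_top at_top"
        using s by real_asymp
      hence "((\<lambda>y. (1 + y/\<sigma>) powr (-\<alpha>)) \<longlongrightarrow> 0) at_top"
        by (rule tendsto_neg_powr[rotated]) (use a in simp)
      thus ?thesis by (metis (no_types) minus_zero tendsto_minus)
    qed
  qed (use s a in \<open>auto intro!: deriv_F0 deriv_F0'\<close>)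
  finally show ?thesis by simp
qed



lemma distr_eq:
  fixes M :: "'a measure" and Y :: "'a \<Rightarrow> real"
  assumes P: "prob_space M" and Ym[measurable]: "Y \<in> borel_measurable M" and sp: "\<sigma> > 0"
    and ap: "\<alpha> > 0"
    and surv: "\<And>x. x > 0 \<Longrightarrow> measure M {\<omega> \<in> space M. Y \<omega> > x} = (1 + x/\<sigma>) powr (-\<alpha>)"
  shows "distr M borel Y = density lborel (\<lambda>y. ennreal (pd \<sigma> \<alpha> y))"
proof (rule cdf_unique)
  interpret prob_space M by fact
  show "real_distribution (distr M borel Y)" by (rule real_distribution_distr) simp
  show rD: "real_distribution (density lborel (\<lambda>y. ennreal (pd \<sigma> \<alpha> y)))"
  proof -
    have "prob_space (density lborel (\<lambda>y. ennreal (pd \<sigma> \<alpha> y)))"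
      by (rule prob_spaceI) (simp add: emeasure_density pd_total[OF sp ap])
    thus ?thesis unfolding real_distribution_def real_distribution_axioms_def by simp
  qed
  show "cdf (distr M borel Y) = cdf (density lborel (\<lambda>y. ennreal (pd \<sigma> \<alpha> y)))"
  proof
    fix x :: real
    have "cdf (distr M borel Y) x = measure M {\<omega> \<in> space M. Y \<omega> \<le> x}"
      unfolding cdf_def by (subst measure_distr) (auto intro!: arg_cong[where f="measure M"])
    moreover have "cdf (density lborel (\<lambda>y. ennreal (pd \<sigma> \<alpha> y))) x
       = enn2real (\<integral>\<^sup>+y. ennreal (pd \<sigma> \<alpha> y) * indicator {..x} y \<partial>lborel)"
      unfolding cdf_def measure_def by (simp add: emeasure_density)
    moreover have "measure M {\<omega> \<in> space M. Y \<omega> \<le> x}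
       = enn2real (\<integral>\<^sup>+y. ennreal (pd \<sigma> \<alpha> y) * indicator {..x} y \<partial>lborel)"
    proof (cases "x > 0")
      case True
      have "0 \<le> 1 - (1 + x/\<sigma>) powr (-\<alpha>)"
        using measure_nonneg cdf_pos[OF P Ym sp surv True] by metis
      thus ?thesis using pd_cdf[OF sp ap] True cdf_pos[OF P Ym sp surv True] by simp
    next
      case False
      have "measure M {\<omega> \<in> space M. Y \<omega> \<le> x} \<le> measure M {\<omega> \<in> space M. Y \<omega> \<le> 0}"
        by (rule finite_measure_mono) (use False in auto)
      hence z: "measure M {\<omega> \<in> space M. Y \<omega> \<le> x} = 0"
        using cdf_zero[OF P Ym sp surv] measure_nonneg[of M] by (metis order_antisym)
      show ?thesis
      proof (cases "x = 0")
        case True thus ?thesis using z pd_cdf[OF sp ap, of 0] by simp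
      next
        case False
        hence "x < 0" using \<open>\<not> x > 0\<close> by simp
        thus ?thesis using z pd_cdf_neg by simp
      qed
    qed
    ultimately show "cdf (distr M borel Y) x = cdf (density lborel (\<lambda>y. ennreal (pd \<sigma> \<alpha> y))) x"
      by simp
  qed
qed

definition G :: "real \<Rightarrow> real \<Rightarrow> real \<Rightarrow> real" where
  "G \<sigma> \<alpha> y = \<sigma> * (1 + y/\<sigma>) powr (-\<alpha>) - \<sigma>*\<alpha>/(\<alpha>-1) * (1 + y/\<sigma>) powr (1-\<alpha>)"

lemma deriv_G:
  assumes s: "\<sigma> > 0" and a: "\<alpha> > 1" and y: "y \<ge> 0"
  shows "(G \<sigma> \<alpha> has_real_derivative (pd \<sigma> \<alpha> y * y)) (at y)"
proof -
  define u where "u = 1 + y/\<sigma>"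
  have p: "1 + y/\<sigma> > 0" using s y by (simp add: add_pos_nonneg)
  have d1: "((\<lambda>y. 1 + y/\<sigma>) has_real_derivative 1/\<sigma>) (at y)"
    using s by (auto intro!: derivative_eq_intros)
  note d2 = DERIV_fun_powr[OF d1 p, of "-\<alpha>"]
  note d3 = DERIV_fun_powr[OF d1 p, of "1-\<alpha>"]
  note d = DERIV_diff[OF DERIV_cmult[OF d2, of \<sigma>] DERIV_cmult[OF d3, of "\<sigma>*\<alpha>/(\<alpha>-1)"]]
  have up: "u > 0" using p u_def by simp
  have e1: "u powr (-\<alpha>) = u * u powr (-\<alpha>-1)"
  proof -
    have "u * u powr (-\<alpha>-1) = u powr 1 * u powr (-\<alpha>-1)" using up by (simp add: abs_of_pos)
    also have "\<dots> = u powr (1 + (-\<alpha>-1))" by (rule powr_add[symmetric])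
    finally show ?thesis by simp
  qed
  have "\<sigma> * (- \<alpha> * u powr (- \<alpha> - real 1) * (1 / \<sigma>)) -
      \<sigma> * \<alpha> / (\<alpha> - 1) * ((1 - \<alpha>) * u powr (1 - \<alpha> - real 1) * (1 / \<sigma>))
      = \<alpha> * u powr (-\<alpha>) - \<alpha> * u powr (-\<alpha>-1)"
    using s a by (simp add: field_simps)
  also have "\<dots> = \<alpha> * u powr (-\<alpha>-1) * (u - 1)" using e1 by (simp add: algebra_simps)
  also have "\<dots> = pd \<sigma> \<alpha> y * y" unfolding pd_def u_def using y s by simp
  finally have eq: "\<sigma> * (- \<alpha> * u powr (- \<alpha> - real 1) * (1 / \<sigma>)) -
      \<sigma> * \<alpha> / (\<alpha> - 1) * ((1 - \<alpha>) * u powr (1 - \<alpha> - real 1) * (1 / \<sigma>)) = pd \<sigma> \<alpha> y * y" .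
  show ?thesis
    using d eq unfolding G_def u_def[symmetric] by (simp add: u_def)
qed



lemma G_value:
  assumes s: "\<sigma> > 0" and a: "\<alpha> > 1" and x: "x \<ge> 0"
  shows "0 - G \<sigma> \<alpha> x = (1 + x/\<sigma>) powr (-\<alpha>) * (\<sigma> + \<alpha>*x)/(\<alpha>-1)"
proof -
  define u where "u = 1 + x/\<sigma>"
  have up: "u > 0" using s x u_def by (simp add: add_pos_nonneg)
  have e1: "u powr (1-\<alpha>) = u * u powr (-\<alpha>)"
  proof -
    have "u * u powr (-\<alpha>) = u powr 1 * u powr (-\<alpha>)" using up by (simp add: abs_of_pos)
    also have "\<dots> = u powr (1 + (-\<alpha>))" by (rule powr_add[symmetric])
    finally show ?thesis by simp
  qed
  have "0 - G \<sigma> \<alpha> x = \<sigma>*\<alpha>/(\<alpha>-1) * (u * u powr (-\<alpha>)) - \<sigma> * u powr (-\<alpha>)"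
    unfolding G_def u_def[symmetric] e1 by simp
  also have "\<dots> = u powr (-\<alpha>) * (\<sigma>*\<alpha>*u - \<sigma>*(\<alpha>-1))/(\<alpha>-1)"
    using a by (simp add: field_simps)
  also have "\<sigma>*\<alpha>*u - \<sigma>*(\<alpha>-1) = \<sigma> + \<alpha>*x" unfolding u_def using s by (simp add: field_simps)
  finally show ?thesis unfolding u_def by simp
qed

lemma tail_nn:
  fixes M :: "'a measure" and Y :: "'a \<Rightarrow> real"
  assumes P: "prob_space M" and Ym[measurable]: "Y \<in> borel_measurable M" and sp: "\<sigma> > 0"
    and ap: "\<alpha> > 1"
    and surv: "\<And>x. x > 0 \<Longrightarrow> measure M {\<omega> \<in> space M. Y \<omega> > x} = (1 + x/\<sigma>) powr (-\<alpha>)"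
    and a: "a \<ge> 0"
  shows "(\<integral>\<^sup>+\<omega>. ennreal (Y \<omega> * indicator {\<omega> \<in> space M. Y \<omega> > a} \<omega>) \<partial>M)
       = ennreal ((1 + a/\<sigma>) powr (-\<alpha>) * (\<sigma> + \<alpha>*a)/(\<alpha>-1))"
proof -
  have ap0: "\<alpha> > 0" using ap by simp
  have "(\<integral>\<^sup>+\<omega>. ennreal (Y \<omega> * indicator {\<omega> \<in> space M. Y \<omega> > a} \<omega>) \<partial>M)
     = (\<integral>\<^sup>+\<omega>. ennreal (Y \<omega> * indicator {a<..} (Y \<omega>)) \<partial>M)"
    by (intro nn_integral_cong) (auto split: split_indicator)
  also have "\<dots> = (\<integral>\<^sup>+y. ennreal (y * indicator {a<..} y) \<partial>distr M borel Y)"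
    by (subst nn_integral_distr) auto
  also have "\<dots> = (\<integral>\<^sup>+y. ennreal (y * indicator {a<..} y) \<partial>density lborel (\<lambda>y. ennreal (pd \<sigma> \<alpha> y)))"
    by (simp add: distr_eq[OF P Ym sp ap0 surv])
  also have "\<dots> = (\<integral>\<^sup>+y. ennreal (pd \<sigma> \<alpha> y) * ennreal (y * indicator {a<..} y) \<partial>lborel)"
    by (subst nn_integral_density) auto
  also have "\<dots> = (\<integral>\<^sup>+y. ennreal (pd \<sigma> \<alpha> y * y) * indicator {a..} y \<partial>lborel)"
  proof (rule nn_integral_cong_AE)
    show "AE y in lborel. ennreal (pd \<sigma> \<alpha> y) * ennreal (y * indicator {a<..} y) =
             ennreal (pd \<sigma> \<alpha> y * y) * indicator {a..} y"
      using AE_lborel_singleton[of a]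
    proof eventually_elim
      case (elim y)
      show ?case
      proof (cases "y > a")
        case True
        thus ?thesis using pd_nonneg[OF sp ap0, of y] a by (simp add: ennreal_mult)
      next
        case False thus ?thesis using elim by (auto split: split_indicator)
      qed
    qed
  qed
  also have "\<dots> = ennreal (0 - G \<sigma> \<alpha> a)"
  proof (rule nn_integral_FTC_atLeast)
    show "(\<lambda>y. pd \<sigma> \<alpha> y * y) \<in> borel_measurable borel" by measurable
    show "\<And>x. a \<le> x \<Longrightarrow> (G \<sigma> \<alpha> has_real_derivative pd \<sigma> \<alpha> x * x) (at x)"
      using a by (intro deriv_G sp ap) auto
    show "\<And>x. a \<le> x \<Longrightarrow> 0 \<le> pd \<sigma> \<alpha> x * x"
      using a pd_nonneg[OF sp ap0] by auto
    have lim: "filterlim (\<lambda>y. 1 + y/\<sigma>) at_top at_top"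
      using sp by real_asymp
    have l1: "((\<lambda>y. (1 + y/\<sigma>) powr (-\<alpha>)) \<longlongrightarrow> 0) at_top"
      by (rule tendsto_neg_powr[OF _ lim]) (use ap in simp)
    have l2: "((\<lambda>y. (1 + y/\<sigma>) powr (1-\<alpha>)) \<longlongrightarrow> 0) at_top"
      by (rule tendsto_neg_powr[OF _ lim]) (use ap in simp)
    show "(G \<sigma> \<alpha> \<longlongrightarrow> 0) at_top"
      unfolding G_def using tendsto_diff[OF tendsto_mult_right_zero[OF l1, of \<sigma>] tendsto_mult_right_zero[OF l2, of "\<sigma>*\<alpha>/(\<alpha>-1)"]]
      by (simp add: mult.commute)
  qed
  also have "\<dots> = ennreal ((1 + a/\<sigma>) powr (-\<alpha>) * (\<sigma> + \<alpha>*a)/(\<alpha>-1))"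
    using G_value[OF sp ap a] by simp
  finally show ?thesis .
qed



lemma main_Y:
  fixes M :: "'a measure" and Y :: "'a \<Rightarrow> real"
  assumes P: "prob_space M" and Ym[measurable]: "Y \<in> borel_measurable M" and sp: "\<sigma> > 0"
    and surv: "\<And>x. x > 0 \<Longrightarrow> measure M {\<omega> \<in> space M. Y \<omega> > x} = (1 + x/\<sigma>) powr (-\<alpha>)"
    and q: "0 \<le> q" "q < 1"
    and int: "integrable M (\<lambda>\<omega>. Y \<omega> * indicator {\<omega> \<in> space M. Y \<omega> > VaR M Y q} \<omega>)"
  shows "CTE M Y q = (\<integral>\<omega>. Y \<omega> \<partial>M) * pareto2_sf \<sigma> (\<alpha> - 1) (VaR M Y q) / (1 - q) + VaR M Y q
       \<and> CTE M Y q = (\<integral>\<omega>. Y \<omega> \<partial>M) + VaR M Y q * \<alpha> / (\<alpha> - 1)"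
proof -
  interpret prob_space M by fact
  have ap: "\<alpha> > 1" by (rule alpha_gt1[OF P Ym sp surv int])
  hence ap0: "\<alpha> > 0" by simp
  define v where "v = VaR M Y q"
  have vf: "v \<ge> 0" "measure M {\<omega> \<in> space M. Y \<omega> > v} = 1 - q" "(1 + v/\<sigma>) powr (-\<alpha>) = 1 - q"
    using var_lemma[OF P Ym sp ap0 surv q] unfolding v_def by auto
  have I: "(\<integral>\<omega>. Y \<omega> * indicator {\<omega> \<in> space M. Y \<omega> > a} \<omega> \<partial>M) = (1 + a/\<sigma>) powr (-\<alpha>) * (\<sigma> + \<alpha>*a)/(\<alpha>-1)"
    if a: "a \<ge> 0" for a
  proof (rule has_bochner_integral_integral_eq, rule has_bochner_integral_nn_integral)
    show "(\<lambda>\<omega>. Y \<omega> * indicator {\<omega> \<in> space M. Y \<omega> > a} \<omega>) \<in> borel_measurable M" by measurable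
    show "AE x in M. 0 \<le> Y x * indicator {\<omega> \<in> space M. Y \<omega> > a} x"
      using a by (auto split: split_indicator)
    show "0 \<le> (1 + a/\<sigma>) powr (-\<alpha>) * (\<sigma> + \<alpha>*a)/(\<alpha>-1)"
      using a ap sp by auto
    show "(\<integral>\<^sup>+\<omega>. ennreal (Y \<omega> * indicator {\<omega> \<in> space M. Y \<omega> > a} \<omega>) \<partial>M) = ennreal ((1 + a/\<sigma>) powr (-\<alpha>) * (\<sigma> + \<alpha>*a)/(\<alpha>-1))"
      by (rule tail_nn[OF P Ym sp ap surv a])
  qed
  have AE: "AE \<omega> in M. Y \<omega> > 0"
  proof -
    have "emeasure M {\<omega> \<in> space M. Y \<omega> \<le> 0} = 0"
      using cdf_zero[OF P Ym sp surv] by (simp add: emeasure_eq_measure)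
    thus ?thesis by (subst AE_iff_measurable[where N="{\<omega> \<in> space M. Y \<omega> \<le> 0}"]) auto
  qed
  have E: "(\<integral>\<omega>. Y \<omega> \<partial>M) = \<sigma>/(\<alpha>-1)"
  proof -
    have "(\<integral>\<omega>. Y \<omega> \<partial>M) = (\<integral>\<omega>. Y \<omega> * indicator {\<omega> \<in> space M. Y \<omega> > 0} \<omega> \<partial>M)"
      by (rule integral_cong_AE) (use AE in \<open>auto split: split_indicator\<close>)
    thus ?thesis using I[of 0] by simp
  qed
  have C: "CTE M Y q = (\<sigma> + \<alpha> * v) / (\<alpha> - 1)"
    unfolding CTE_def v_def[symmetric] using I[OF vf(1)] vf q by simp
  have c2: "CTE M Y q = (\<integral>\<omega>. Y \<omega> \<partial>M) + v * \<alpha> / (\<alpha> - 1)"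
    unfolding C E using ap by (simp add: add_divide_distrib mult.commute)
  have c1: "CTE M Y q = (\<integral>\<omega>. Y \<omega> \<partial>M) * pareto2_sf \<sigma> (\<alpha> - 1) v / (1 - q) + v"
  proof (cases "v > 0")
    case True
    define u where "u = 1 + v/\<sigma>"
    have up: "u > 0" using sp vf u_def by (simp add: add_pos_nonneg)
    have e1: "u powr (-(\<alpha>-1)) = u * u powr (-\<alpha>)"
    proof -
      have "u * u powr (-\<alpha>) = u powr 1 * u powr (-\<alpha>)" using up by (simp add: abs_of_pos)
      also have "\<dots> = u powr (1 + (-\<alpha>))" by (rule powr_add[symmetric])
      finally show ?thesis by simp
    qed
    have ps: "pareto2_sf \<sigma> (\<alpha> - 1) v = u * (1 - q)"
      unfolding pareto2_sf_def using True e1 vf(3) by (simp add: u_def)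
    have "(\<integral>\<omega>. Y \<omega> \<partial>M) * pareto2_sf \<sigma> (\<alpha> - 1) v / (1 - q) + v = \<sigma> / (\<alpha> - 1) * u + v"
      unfolding E ps using q by simp
    also have "\<dots> = (\<sigma> + v) / (\<alpha> - 1) + v" unfolding u_def using sp ap by (simp add: field_simps)
    also have "\<dots> = (\<sigma> + \<alpha> * v) / (\<alpha> - 1)" using ap by (simp add: field_simps)
    finally show ?thesis unfolding C by simp
  next
    case False
    hence v0: "v = 0" using vf by simp
    hence "q = 0" using vf(3) by simp
    thus ?thesis unfolding C E pareto2_sf_def using v0 by simp
  qed
  show ?thesis using c1 c2 unfolding v_def by simp
qed



lemma marginal:
  fixes M :: "'a measure" and n :: nat
    and c :: "nat \<Rightarrow> nat \<Rightarrow> real"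
    and \<sigma> \<gamma> :: "nat \<Rightarrow> real"
    and X :: "nat \<Rightarrow> 'a \<Rightarrow> real"
    and i :: nat
  assumes P: "prob_space M"
    and c01: "\<forall>i\<in>{1..n}. \<forall>j\<in>{1..n+1}. c i j \<in> {0, 1}"
    and \<sigma>pos: "\<forall>i\<in>{1..n}. \<sigma> i > 0"
    and meas: "\<forall>i\<in>{1..n}. X i \<in> borel_measurable M"
    and dist: "\<forall>x::nat \<Rightarrow> real. (\<forall>i\<in>{1..n}. x i > 0) \<longrightarrow>
        measure M {\<omega> \<in> space M. \<forall>i\<in>{1..n}. X i \<omega> > x i}
        = (\<Prod>j=1..n+1. (1 + (\<Sum>i=1..n. c i j * x i / \<sigma> i)) powr (- \<gamma> j))"
    and i: "i \<in> {1..n}"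
    and x: "x > 0"
  shows "measure M {\<omega> \<in> space M. X i \<omega> > x} = (1 + x / \<sigma> i) powr (- (\<Sum>j=1..n+1. c i j * \<gamma> j))"
proof -
  interpret prob_space M by fact
  define w where "w k = (if k = i then x else 0)" for k
  define e where "e k = (if k = i then 0 else (1::real))" for k
  define H where "H \<epsilon> = (\<Prod>j=1..n+1. (1 + (\<Sum>k=1..n. c k j * (w k + e k * \<epsilon>) / \<sigma> k)) powr (- \<gamma> j))" for \<epsilon>
  define Gf where "Gf \<epsilon> = (\<Prod>j=1..n+1. (1 + (\<Sum>k=1..n. c k j * \<epsilon> / \<sigma> k)) powr (- \<gamma> j))" for \<epsilon>
  define A where "A \<epsilon> = {\<omega> \<in> space M. \<forall>k\<in>{1..n}. X k \<omega> > w k + e k * \<epsilon>}" for \<epsilon>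
  define B where "B \<epsilon> = {\<omega> \<in> space M. \<forall>k\<in>{1..n}. X k \<omega> > \<epsilon>}" for \<epsilon>
  have setsk: "{\<omega> \<in> space M. X k \<omega> > t} \<in> sets M" if k: "k \<in> {1..n}" for k t
  proof -
    have [measurable]: "X k \<in> borel_measurable M" using meas k by auto
    show ?thesis by measurable
  qed
  have Aset: "A \<epsilon> \<in> sets M" for \<epsilon>
    unfolding A_def by (rule sets.sets_Collect_countable_All') (auto intro: setsk)
  have Bset: "B \<epsilon> \<in> sets M" for \<epsilon>
    unfolding B_def by (rule sets.sets_Collect_countable_All') (auto intro: setsk)
  have Yset: "{\<omega> \<in> space M. X i \<omega> > x} \<in> sets M" using setsk i by auto
  have mA: "measure M (A \<epsilon>) = H \<epsilon>" if "\<epsilon> > 0" for \<epsilon>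
  proof -
    have "\<forall>k\<in>{1..n}. w k + e k * \<epsilon> > 0" using that x by (auto simp: w_def e_def)
    thus ?thesis using dist unfolding A_def H_def by auto
  qed
  have mB: "measure M (B \<epsilon>) = Gf \<epsilon>" if "\<epsilon> > 0" for \<epsilon>
  proof -
    have "\<And>k. k\<in>{1..n} \<Longrightarrow> (\<lambda>_. \<epsilon>) k > 0" using that by auto
    from dist[rule_format, OF this] show ?thesis unfolding B_def Gf_def by auto
  qed
  have base_pos: "1 + (\<Sum>k=1..n. c k j * (w k + e k * \<epsilon>) / \<sigma> k) \<ge> 1" if "\<epsilon> \<ge> 0" "j \<in> {1..n+1}" for \<epsilon> j
  proof -
    have "(\<Sum>k=1..n. c k j * (w k + e k * \<epsilon>) / \<sigma> k) \<ge> 0"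
    proof (rule sum_nonneg)
      fix k assume k: "k \<in> {1..n}"
      have "c k j \<in> {0,1}" using c01 k that by auto
      hence "c k j \<ge> 0" by auto
      moreover have "w k + e k * \<epsilon> \<ge> 0" using x that by (auto simp: w_def e_def)
      moreover have "\<sigma> k > 0" using \<sigma>pos k by auto
      ultimately show "c k j * (w k + e k * \<epsilon>) / \<sigma> k \<ge> 0" by simp
    qed
    thus ?thesis by simp
  qed
  have base_pos2: "1 + (\<Sum>k=1..n. c k j * \<epsilon> / \<sigma> k) \<ge> 1" if "\<epsilon> \<ge> 0" "j \<in> {1..n+1}" for \<epsilon> j
  proof -
    have "(\<Sum>k=1..n. c k j * \<epsilon> / \<sigma> k) \<ge> 0"
    proof (rule sum_nonneg)
      fix k assume k: "k \<in> {1..n}"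
      have "c k j \<in> {0,1}" using c01 k that by auto
      hence "c k j \<ge> 0" by auto
      moreover have "\<sigma> k > 0" using \<sigma>pos k by auto
      ultimately show "c k j * \<epsilon> / \<sigma> k \<ge> 0" using that by simp
    qed
    thus ?thesis by simp
  qed
  have \<sigma>ne: "\<And>k. k \<in> {1..n} \<Longrightarrow> \<sigma> k \<noteq> 0" using \<sigma>pos by force
  have lw: "\<And>k. ((\<lambda>\<epsilon>. w k + e k * \<epsilon>) \<longlongrightarrow> w k) (at_right 0)"
  proof -
    fix k
    have "((\<lambda>\<epsilon>. w k + e k * \<epsilon>) \<longlongrightarrow> w k + e k * 0) (at_right 0)"
      by (intro tendsto_intros)
    thus "((\<lambda>\<epsilon>. w k + e k * \<epsilon>) \<longlongrightarrow> w k) (at_right 0)" by simp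
  qed
  have limH: "(H \<longlongrightarrow> H 0) (at_right 0)"
    unfolding H_def
  proof (rule tendsto_prod)
    fix j assume j: "j \<in> {1..n+1}"
    show "((\<lambda>\<epsilon>. (1 + (\<Sum>k=1..n. c k j * (w k + e k * \<epsilon>) / \<sigma> k)) powr (- \<gamma> j)) \<longlongrightarrow>
          (1 + (\<Sum>k=1..n. c k j * (w k + e k * 0) / \<sigma> k)) powr (- \<gamma> j)) (at_right 0)"
    proof -
      have l: "((\<lambda>\<epsilon>. 1 + (\<Sum>k=1..n. c k j * (w k + e k * \<epsilon>) / \<sigma> k)) \<longlongrightarrow> 1 + (\<Sum>k=1..n. c k j * (w k + e k * 0) / \<sigma> k)) (at_right 0)"
        by (intro tendsto_intros) (use \<sigma>ne in auto)
      show ?thesis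
        by (rule tendsto_powr[OF l tendsto_const]) (use base_pos[OF _ j, of 0] in auto)
    qed
  qed
  have limG: "(Gf \<longlongrightarrow> Gf 0) (at_right 0)"
    unfolding Gf_def
  proof (rule tendsto_prod)
    fix j assume j: "j \<in> {1..n+1}"
    show "((\<lambda>\<epsilon>. (1 + (\<Sum>k=1..n. c k j * \<epsilon> / \<sigma> k)) powr (- \<gamma> j)) \<longlongrightarrow>
          (1 + (\<Sum>k=1..n. c k j * 0 / \<sigma> k)) powr (- \<gamma> j)) (at_right 0)"
    proof -
      have l: "((\<lambda>\<epsilon>. 1 + (\<Sum>k=1..n. c k j * \<epsilon> / \<sigma> k)) \<longlongrightarrow> 1 + (\<Sum>k=1..n. c k j * 0 / \<sigma> k)) (at_right 0)"
        by (intro tendsto_intros) (use \<sigma>ne in auto)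
      show ?thesis
        by (rule tendsto_powr[OF l tendsto_const]) (use base_pos2[OF _ j, of 0] in auto)
    qed
  qed
  have G0: "Gf 0 = 1" unfolding Gf_def by simp
  let ?p = "measure M {\<omega> \<in> space M. X i \<omega> > x}"
  have low: "H 0 \<le> ?p"
  proof (rule tendsto_upperbound[OF limH])
    show "\<forall>\<^sub>F \<epsilon> in at_right 0. H \<epsilon> \<le> ?p"
      using eventually_at_right_less[of "0::real"]
    proof eventually_elim
      case (elim \<epsilon>)
      have "A \<epsilon> \<subseteq> {\<omega> \<in> space M. X i \<omega> > x}"
        using i by (auto simp: A_def w_def e_def)
      hence "measure M (A \<epsilon>) \<le> ?p" by (intro finite_measure_mono Yset)
      thus ?case using mA[OF elim] by simp
    qed
  qed simp
  have up: "?p \<le> H 0 + 1 - Gf 0"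
  proof (rule tendsto_lowerbound[OF tendsto_diff[OF tendsto_add[OF limH tendsto_const] limG]])
    show "\<forall>\<^sub>F \<epsilon> in at_right 0. ?p \<le> H \<epsilon> + 1 - Gf \<epsilon>"
      using eventually_at_right_less[of "0::real"]
    proof eventually_elim
      case (elim \<epsilon>)
      have "{\<omega> \<in> space M. X i \<omega> > x} \<subseteq> A \<epsilon> \<union> (space M - B \<epsilon>)"
        by (auto simp: A_def B_def w_def e_def)
      hence "?p \<le> measure M (A \<epsilon> \<union> (space M - B \<epsilon>))"
        using Aset Bset by (intro finite_measure_mono) auto
      also have "\<dots> \<le> measure M (A \<epsilon>) + measure M (space M - B \<epsilon>)"
        using Aset Bset by (intro measure_subadditive) (auto simp: emeasure_eq_measure)
      also have "measure M (space M - B \<epsilon>) = 1 - measure M (B \<epsilon>)"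
        using Bset by (rule prob_compl)
      finally show ?case using mA[OF elim] mB[OF elim] by simp
    qed
  qed simp
  have pe: "?p = H 0" using low up G0 by simp
  have sp: "\<sigma> i > 0" using \<sigma>pos i by auto
  have fac: "(1 + (\<Sum>k=1..n. c k j * (w k + e k * 0) / \<sigma> k)) powr (- \<gamma> j)
        = (1 + x / \<sigma> i) powr (- (c i j * \<gamma> j))" if j: "j \<in> {1..n+1}" for j
  proof -
    have "(\<Sum>k=1..n. c k j * (w k + e k * 0) / \<sigma> k) = (\<Sum>k=1..n. if k = i then c i j * x / \<sigma> i else 0)"
      by (rule sum.cong) (auto simp: w_def)
    also have "\<dots> = c i j * x / \<sigma> i" using i by simp
    finally have s: "(\<Sum>k=1..n. c k j * (w k + e k * 0) / \<sigma> k) = c i j * x / \<sigma> i" .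
    have "1 + x / \<sigma> i > 0" using x sp by (simp add: add_pos_pos)
    moreover have "c i j = 0 \<or> c i j = 1" using c01 i j by auto
    ultimately show ?thesis unfolding s by auto
  qed
  have "H 0 = (\<Prod>j=1..n+1. (1 + x / \<sigma> i) powr (- (c i j * \<gamma> j)))"
    unfolding H_def
    apply (rule prod.cong[OF refl])
    subgoal for j using fac[of j] by simp
    done
  also have "\<dots> = (1 + x / \<sigma> i) powr (\<Sum>j=1..n+1. - (c i j * \<gamma> j))"
  proof -
    have "1 + x / \<sigma> i > 0" using x sp by (simp add: add_pos_pos)
    thus ?thesis by (subst powr_sum) auto
  qed
  also have "\<dots> = (1 + x / \<sigma> i) powr (- (\<Sum>j=1..n+1. c i j * \<gamma> j))"
    by (simp add: sum_negf)
  finally show ?thesis using pe by simp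
qed


theorem corollary4p3:
  fixes M :: "'a measure" and n :: nat
    and c :: "nat \<Rightarrow> nat \<Rightarrow> real"
    and \<sigma> \<gamma> :: "nat \<Rightarrow> real"
    and X :: "nat \<Rightarrow> 'a \<Rightarrow> real"
    and i :: nat and q :: real
  assumes "prob_space M"
    and c01: "\<forall>i\<in>{1..n}. \<forall>j\<in>{1..n+1}. c i j \<in> {0, 1}"
    and \<sigma>pos: "\<forall>i\<in>{1..n}. \<sigma> i > 0"
    and \<gamma>pos: "\<forall>j\<in>{1..n+1}. \<gamma> j > 0"
    and meas: "\<forall>i\<in>{1..n}. X i \<in> borel_measurable M"
    and dist: "\<forall>x::nat \<Rightarrow> real. (\<forall>i\<in>{1..n}. x i > 0) \<longrightarrow>
        measure M {\<omega> \<in> space M. \<forall>i\<in>{1..n}. X i \<omega> > x i}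
        = (\<Prod>j=1..n+1. (1 + (\<Sum>i=1..n. c i j * x i / \<sigma> i)) powr (- \<gamma> j))"
    and i: "i \<in> {1..n}"
    and q: "0 \<le> q" "q < 1"
    and CTE_exists: "integrable M (\<lambda>\<omega>. X i \<omega> * indicator {\<omega> \<in> space M. X i \<omega> > VaR M (X i) q} \<omega>)"
  shows "CTE M (X i) q
           = (\<integral>\<omega>. X i \<omega> \<partial>M)
               * pareto2_sf (\<sigma> i) ((\<Sum>j=1..n+1. c i j * \<gamma> j) - 1) (VaR M (X i) q) / (1 - q)
             + VaR M (X i) q
       \<and> CTE M (X i) q
           = (\<integral>\<omega>. X i \<omega> \<partial>M)
             + VaR M (X i) q * (\<Sum>j=1..n+1. c i j * \<gamma> j) / ((\<Sum>j=1..n+1. c i j * \<gamma> j) - 1)"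
proof -
  have sp: "\<sigma> i > 0" using \<sigma>pos i by auto
  have mi[measurable]: "X i \<in> borel_measurable M" using meas i by auto
  have surv: "\<And>x. x > 0 \<Longrightarrow> measure M {\<omega> \<in> space M. X i \<omega> > x} = (1 + x / \<sigma> i) powr (- (\<Sum>j=1..n+1. c i j * \<gamma> j))"
    by (rule marginal[OF assms(1) c01 \<sigma>pos meas dist i])
  from main_Y[OF assms(1) mi sp surv q CTE_exists] show ?thesis by simp
qed

end
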